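(* Let $f,g:[0,\infty)\to[0,\infty)$, let $0<a<b<\infty$, and suppose $fg$ is Lebesgue integrable on $[a,b]$. Let $(\alpha_1,m_1),(\alpha_2,m_2)\in(0,1]^2$. Suppose $f$ is $(\alpha_1,m_1)$-GA-concave on $[0,\max\{a^{1/m_1},b\}]$ and $g$ is $(\alpha_2,m_2)$-GA-concave on $[0,\max\{a^{1/m_2},b\}]$. Then \begin{multline*} \int_a^b f(x)g(x)\,dx\ge(\ln b-\ln a)\Bigl\{m_1m_2\bigl[L(a,b)-G(\alpha_1,1)-G(\alpha_2,1)+G(\alpha_1+\alpha_2,1)\bigr]f(a^{1/m_1})g(a^{1/m_2})\\ +m_1\bigl[G(\alpha_2,1)-G(\alpha_1+\alpha_2,1)\bigr]f(a^{1/m_1})g(b)+m_2\bigl[G(\alpha_1,1)-G(\alpha_1+\alpha_2,1)\bigr]f(b)g(a^{1/m_2})+G(\alpha_1+\alpha_2,1)f(b)g(b)\Bigr\}. \end{multline*}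
   Context: For $c>0$, $h:[0,c]\to\mathbb{R}$ and $(\alpha,m)\in(0,1]^2$, $h$ is called $(\alpha,m)$-GA-concave on $[0,c]$ if $h\bigl(x^\lambda y^{m(1-\lambda)}\bigr)\ge\lambda^\alpha h(x)+m(1-\lambda^\alpha)h(y)$ for all $x,y\in[0,c]$ and all $\lambda\in[0,1]$ (with the convention $0^0=1$). For fixed $0<a<b$ and $\ell\ge0$, $\alpha>0$, set $G(\alpha,\ell)=\int_0^1 t^\alpha a^{\ell(1-t)}b^{\ell t}\,dt$. For $x,y>0$, $x\neq y$, the logarithmic mean is $L(x,y)=\frac{y-x}{\ln y-\ln x}$. *)

theory Defs
  imports "HOL-Analysis.Analysis"
begin

text \<open>Real power with the convention 0^0 = 1 (x \<ge> 0).\<close>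
definition pw :: "real \<Rightarrow> real \<Rightarrow> real" where
  "pw x t = (if t = 0 then 1 else x powr t)"

definition GA_concave :: "real \<Rightarrow> real \<Rightarrow> real \<Rightarrow> (real \<Rightarrow> real) \<Rightarrow> bool" where
  "GA_concave \<alpha> m c h \<longleftrightarrow>
     (\<forall>x\<in>{0..c}. \<forall>y\<in>{0..c}. \<forall>t\<in>{0..1}.
        h (pw x t * pw y (m * (1 - t))) \<ge> pw t \<alpha> * h x + m * (1 - pw t \<alpha>) * h y)"

definition Gfun :: "real \<Rightarrow> real \<Rightarrow> real \<Rightarrow> real \<Rightarrow> real" where
  "Gfun a b \<alpha> l = integral {0..1} (\<lambda>t. t powr \<alpha> * a powr (l * (1 - t)) * b powr (l * t))"

definition logmean :: "real \<Rightarrow> real \<Rightarrow> real" where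
  "logmean x y = (y - x) / (ln y - ln x)"

end

theory Submission
  imports Defs
begin

lemma pw_pos: "x > 0 \<Longrightarrow> pw x t = x powr t"
  by (simp add: pw_def)

lemma GA_lower:
  assumes h: "GA_concave \<alpha> m c hh" and a: "0 < a" "a < b" and m: "0 < m" and al: "0 < \<alpha>"
    and c: "b \<le> c" "a powr (1/m) \<le> c" and x: "x \<in> {a..b}"
  shows "hh x \<ge> ((ln x - ln a)/(ln b - ln a)) powr \<alpha> * hh b
          + m * (1 - ((ln x - ln a)/(ln b - ln a)) powr \<alpha>) * hh (a powr (1/m))"
proof -
  define t where "t = (ln x - ln a)/(ln b - ln a)"
  have D: "ln b - ln a > 0" using a by simp
  have xp: "x > 0" using x a by auto
  have "ln a \<le> ln x" "ln x \<le> ln b" using x a xp by auto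
  hence t01: "t \<in> {0..1}" using D unfolding t_def by (auto simp: field_simps)
  have ap: "a powr (1/m) > 0" using a by simp
  have "pw b t * pw (a powr (1/m)) (m * (1 - t)) = b powr t * a powr (1 - t)"
    using a ap m by (simp add: pw_pos powr_powr)
  also have "\<dots> = exp (t * ln b + (1 - t) * ln a)"
    using a by (simp add: powr_def exp_add)
  also have "t * ln b + (1 - t) * ln a = ln x"
  proof -
    have "t * (ln b - ln a) = ln x - ln a" unfolding t_def using D by simp
    thus ?thesis by (simp add: algebra_simps)
  qed
  also have "exp (ln x) = x" using xp by simp
  finally have eq: "pw b t * pw (a powr (1/m)) (m * (1 - t)) = x" .
  have "b \<in> {0..c}" "a powr (1/m) \<in> {0..c}" using a c by auto
  with h t01 have "hh (pw b t * pw (a powr (1/m)) (m * (1 - t))) \<ge> pw t \<alpha> * hh b + m * (1 - pw t \<alpha>) * hh (a powr (1/m))"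
    unfolding GA_concave_def by blast
  thus ?thesis using eq al unfolding t_def[symmetric] by (simp add: pw_def)
qed

lemma Gfun_int:
  assumes a: "0 < a" "0 < b" and al: "0 < \<alpha>"
  shows "((\<lambda>t. t powr \<alpha> * exp (ln a + t * (ln b - ln a))) has_integral Gfun a b \<alpha> 1) {0..1}"
proof -
  have eq: "\<And>t. t powr \<alpha> * a powr (1 * (1 - t)) * b powr (1 * t) = t powr \<alpha> * exp (ln a + t * (ln b - ln a))"
    using a by (simp add: powr_def exp_add[symmetric] algebra_simps)
  have "continuous_on {0..1} (\<lambda>t::real. t powr \<alpha> * exp (ln a + t * (ln b - ln a)))"
    using al by (intro continuous_intros continuous_on_powr') auto
  hence "(\<lambda>t. t powr \<alpha> * exp (ln a + t * (ln b - ln a))) integrable_on {0..1}"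
    by (rule integrable_continuous_interval)
  thus ?thesis unfolding Gfun_def eq by (rule integrable_integral)
qed

theorem theorem3p7:
  fixes f g :: "real \<Rightarrow> real" and a b \<alpha>1 m1 \<alpha>2 m2 :: real
  assumes f_nonneg: "\<forall>x\<ge>0. f x \<ge> 0" and g_nonneg: "\<forall>x\<ge>0. g x \<ge> 0"
    and ab: "0 < a" "a < b"
    and int: "set_integrable lborel {a..b} (\<lambda>x. f x * g x)"
    and p1: "0 < \<alpha>1" "\<alpha>1 \<le> 1" "0 < m1" "m1 \<le> 1"
    and p2: "0 < \<alpha>2" "\<alpha>2 \<le> 1" "0 < m2" "m2 \<le> 1"
    and fc: "GA_concave \<alpha>1 m1 (max (a powr (1/m1)) b) f"
    and gc: "GA_concave \<alpha>2 m2 (max (a powr (1/m2)) b) g"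
  shows "(LBINT x:{a..b}. f x * g x) \<ge>
    (ln b - ln a) *
     (m1 * m2 * (logmean a b - Gfun a b \<alpha>1 1 - Gfun a b \<alpha>2 1 + Gfun a b (\<alpha>1 + \<alpha>2) 1)
          * f (a powr (1/m1)) * g (a powr (1/m2))
      + m1 * (Gfun a b \<alpha>2 1 - Gfun a b (\<alpha>1 + \<alpha>2) 1) * f (a powr (1/m1)) * g b
      + m2 * (Gfun a b \<alpha>1 1 - Gfun a b (\<alpha>1 + \<alpha>2) 1) * f b * g (a powr (1/m2))
      + Gfun a b (\<alpha>1 + \<alpha>2) 1 * f b * g b)"
proof -
  define D where "D = ln b - ln a"
  have Dp: "D > 0" using ab by (simp add: D_def)
  define F where "F = f b"
  define F0 where "F0 = f (a powr (1/m1))"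
  define Gb where "Gb = g b"
  define G0 where "G0 = g (a powr (1/m2))"
  have F0: "F \<ge> 0" "F0 \<ge> 0" "Gb \<ge> 0" "G0 \<ge> 0"
    using f_nonneg g_nonneg ab unfolding F_def F0_def Gb_def G0_def by auto
  define Q where "Q = (\<lambda>t::real. (t powr \<alpha>1 * F + m1 * (1 - t powr \<alpha>1) * F0) *
                          (t powr \<alpha>2 * Gb + m2 * (1 - t powr \<alpha>2) * G0))"
  define \<tau> where "\<tau> = (\<lambda>x. (ln x - ln a) / D)"
  define P where "P = (\<lambda>x. Q (\<tau> x))"
  define \<phi> where "\<phi> = (\<lambda>t. exp (ln a + t * D))"
  have \<tau>01: "\<tau> x \<in> {0..1}" if "x \<in> {a..b}" for x
  proof -
    have "ln a \<le> ln x" "ln x \<le> ln b" using that ab by auto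
    thus ?thesis using Dp unfolding \<tau>_def D_def by (auto simp: field_simps)
  qed
  have low: "f x * g x \<ge> P x" if x: "x \<in> {a..b}" for x
  proof -
    have t: "\<tau> x \<in> {0..1}" using \<tau>01 x .
    have l1: "f x \<ge> \<tau> x powr \<alpha>1 * F + m1 * (1 - \<tau> x powr \<alpha>1) * F0"
      using GA_lower[OF fc ab(1,2) p1(3) p1(1) _ _ x] unfolding \<tau>_def D_def F_def F0_def by auto
    have l2: "g x \<ge> \<tau> x powr \<alpha>2 * Gb + m2 * (1 - \<tau> x powr \<alpha>2) * G0"
      using GA_lower[OF gc ab(1,2) p2(3) p2(1) _ _ x] unfolding \<tau>_def D_def Gb_def G0_def by auto
    have "\<tau> x powr \<alpha>1 \<le> 1" "\<tau> x powr \<alpha>2 \<le> 1" using t p1 p2 by (auto intro!: powr_le1)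
    hence n: "\<tau> x powr \<alpha>1 * F + m1 * (1 - \<tau> x powr \<alpha>1) * F0 \<ge> 0"
             "\<tau> x powr \<alpha>2 * Gb + m2 * (1 - \<tau> x powr \<alpha>2) * G0 \<ge> 0"
      using F0 p1 p2 by auto
    have "P x \<le> f x * g x" unfolding P_def Q_def
      by (rule mult_mono[OF l1 l2]) (use n l1 in auto)
    thus ?thesis .
  qed
  have contQ: "continuous_on {0..1} Q"
    unfolding Q_def using p1 p2 by (intro continuous_intros continuous_on_powr') auto
  have cont\<tau>: "continuous_on {a..b} \<tau>"
    unfolding \<tau>_def using ab Dp by (intro continuous_intros) auto
  have contP: "continuous_on {a..b} P"
    unfolding P_def by (rule continuous_on_compose2[OF contQ cont\<tau>]) (use \<tau>01 in auto)
  have \<phi>0: "\<phi> 0 = a" and \<phi>1: "\<phi> 1 = b" using ab by (auto simp: \<phi>_def D_def)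
  have \<phi>range: "\<phi> ` {0..1} \<subseteq> {a..b}"
  proof
    fix y assume "y \<in> \<phi> ` {0..1}"
    then obtain t where t: "t \<in> {0..1}" "y = \<phi> t" by auto
    have "ln a + t * D \<ge> ln a" "ln a + t * D \<le> ln a + D"
      using t Dp by (auto simp: mult_left_le_one_le)
    hence "exp (ln a) \<le> \<phi> t" "\<phi> t \<le> exp (ln a + D)" unfolding \<phi>_def by auto
    thus "y \<in> {a..b}" using ab t by (auto simp: D_def)
  qed
  have der: "(\<phi> has_field_derivative (\<phi> t * D)) (at t within {0..1})" for t
    unfolding \<phi>_def by (auto intro!: derivative_eq_intros)
  have S1: "((\<lambda>t. (\<phi> t * D) *\<^sub>R P (\<phi> t)) has_integral integral {\<phi> 0..\<phi> 1} P) {0..1}"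
    by (rule has_integral_substitution[OF _ _ \<phi>range contP der]) (use \<phi>0 \<phi>1 ab in auto)
  have S2: "((\<lambda>t. (\<phi> t * D) *\<^sub>R (\<lambda>_. 1::real) (\<phi> t)) has_integral integral {\<phi> 0..\<phi> 1} (\<lambda>_. 1::real)) {0..1}"
    by (rule has_integral_substitution[OF _ _ \<phi>range _ der]) (use \<phi>0 \<phi>1 ab in auto)
  have \<tau>\<phi>: "\<tau> (\<phi> t) = t" for t
    unfolding \<tau>_def \<phi>_def using Dp by simp
  have I0: "(\<phi> has_integral logmean a b) {0..1}"
  proof -
    have "((\<lambda>t. D * \<phi> t) has_integral (b - a)) {0..1}"
      using S2 \<phi>0 \<phi>1 ab by (simp add: mult.commute)
    hence "((\<lambda>t. inverse D * (D * \<phi> t)) has_integral inverse D * (b - a)) {0..1}"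
      by (rule has_integral_mult_right)
    thus ?thesis using Dp by (simp add: logmean_def D_def[symmetric] field_simps)
  qed
  have IG: "((\<lambda>t. t powr \<alpha> * \<phi> t) has_integral Gfun a b \<alpha> 1) {0..1}" if "\<alpha> > 0" for \<alpha>
    using Gfun_int[OF ab(1) _ that] ab unfolding \<phi>_def D_def by auto
  note I1 = IG[OF p1(1)] and I2 = IG[OF p2(1)]
  have I12: "((\<lambda>t. t powr (\<alpha>1 + \<alpha>2) * \<phi> t) has_integral Gfun a b (\<alpha>1 + \<alpha>2) 1) {0..1}" using IG[of "\<alpha>1 + \<alpha>2"] p1 p2 by simp
  define L where "L = logmean a b"
  define G1 where "G1 = Gfun a b \<alpha>1 1"
  define G2 where "G2 = Gfun a b \<alpha>2 1"
  define G12 where "G12 = Gfun a b (\<alpha>1 + \<alpha>2) 1"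
  have Comb: "((\<lambda>t. D * (m1*m2*F0*G0*(\<phi> t - t powr \<alpha>1 * \<phi> t - t powr \<alpha>2 * \<phi> t + t powr (\<alpha>1+\<alpha>2) * \<phi> t)
       + m1*F0*Gb*(t powr \<alpha>2 * \<phi> t - t powr (\<alpha>1+\<alpha>2) * \<phi> t)
       + m2*F*G0*(t powr \<alpha>1 * \<phi> t - t powr (\<alpha>1+\<alpha>2) * \<phi> t)
       + F*Gb*(t powr (\<alpha>1+\<alpha>2) * \<phi> t)))
     has_integral D * (m1*m2*F0*G0*(L - G1 - G2 + G12) + m1*F0*Gb*(G2 - G12)
       + m2*F*G0*(G1 - G12) + F*Gb*G12)) {0..1}"
    unfolding L_def G1_def G2_def G12_def
    by (intro has_integral_mult_right has_integral_add has_integral_diff I0 I1 I2 I12)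
  have feq: "(\<phi> t * D) *\<^sub>R P (\<phi> t) = D * (m1*m2*F0*G0*(\<phi> t - t powr \<alpha>1 * \<phi> t - t powr \<alpha>2 * \<phi> t + t powr (\<alpha>1+\<alpha>2) * \<phi> t)
       + m1*F0*Gb*(t powr \<alpha>2 * \<phi> t - t powr (\<alpha>1+\<alpha>2) * \<phi> t)
       + m2*F*G0*(t powr \<alpha>1 * \<phi> t - t powr (\<alpha>1+\<alpha>2) * \<phi> t)
       + F*Gb*(t powr (\<alpha>1+\<alpha>2) * \<phi> t))" for t
    unfolding P_def \<tau>\<phi> Q_def by (simp add: powr_add algebra_simps)
  have "integral {\<phi> 0..\<phi> 1} P = D * (m1*m2*F0*G0*(L - G1 - G2 + G12) + m1*F0*Gb*(G2 - G12)
       + m2*F*G0*(G1 - G12) + F*Gb*G12)"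
    using has_integral_unique[OF S1[unfolded feq] Comb] .
  hence IP: "integral {a..b} P = D * (m1*m2*F0*G0*(L - G1 - G2 + G12) + m1*F0*Gb*(G2 - G12)
       + m2*F*G0*(G1 - G12) + F*Gb*G12)" using \<phi>0 \<phi>1 by simp
  have fgi: "(\<lambda>x. f x * g x) integrable_on {a..b}"
    and eqL: "(LBINT x:{a..b}. f x * g x) = integral {a..b} (\<lambda>x. f x * g x)"
    using set_borel_integral_eq_integral[OF int] by auto
  have "integral {a..b} P \<le> integral {a..b} (\<lambda>x. f x * g x)"
    by (rule integral_le[OF integrable_continuous_interval[OF contP] fgi low])
  moreover have "D * (m1*m2*F0*G0*(L - G1 - G2 + G12) + m1*F0*Gb*(G2 - G12)
       + m2*F*G0*(G1 - G12) + F*Gb*G12) =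
    (ln b - ln a) *
     (m1 * m2 * (logmean a b - Gfun a b \<alpha>1 1 - Gfun a b \<alpha>2 1 + Gfun a b (\<alpha>1 + \<alpha>2) 1)
          * f (a powr (1/m1)) * g (a powr (1/m2))
      + m1 * (Gfun a b \<alpha>2 1 - Gfun a b (\<alpha>1 + \<alpha>2) 1) * f (a powr (1/m1)) * g b
      + m2 * (Gfun a b \<alpha>1 1 - Gfun a b (\<alpha>1 + \<alpha>2) 1) * f b * g (a powr (1/m2))
      + Gfun a b (\<alpha>1 + \<alpha>2) 1 * f b * g b)"
    unfolding D_def L_def G1_def G2_def G12_def F_def F0_def Gb_def G0_def
    by (simp add: algebra_simps)
  ultimately show ?thesis using IP eqL by simp
qed

end
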